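(* Let $G$ be a graph, $m\geq 3$, and $\mathcal{H}=(L,H)$ an $m$-fold cover of $G$. Let $\alpha_1,\alpha_2,\alpha_3$ be a path in $G$ with $\alpha_1\alpha_3\notin E(G)$, let $e_1=\alpha_1\alpha_2$, $e_2=\alpha_2\alpha_3$, and let $G_0=G-\{e_1,e_2\}$, $G_1=G-\{e_1\}$, $G_2=G-\{e_2\}$, and $G^*$ the graph obtained from $G$ by adding the edge $\alpha_1\alpha_3$. Let $H'=H-(E_H(L(\alpha_1),L(\alpha_2))\cup E_H(L(\alpha_2),L(\alpha_3)))$, so $\mathcal{H}'=(L,H')$ is an $m$-fold cover of $G_0$, and assume there is a natural bijection between the $\mathcal{H}'$-colorings of $G_0$ and the proper $m$-colorings of $G_0$. Define $A_1=P(G_0,m)-P(G,m)$, $A_2=P(G_0,m)-P(G_2,m)+\frac{1}{m-1}P(G,m)$, $A_3=P(G_0,m)-P(G_1,m)+\frac{1}{m-1}P(G,m)$, $A_4=\frac{1}{m-1}\left(P(G_1,m)+P(G_2,m)+P(G^*,m)-P(G,m)\right)$, $A_5=\frac{1}{m-1}\left(P(G_1,m)+P(G_2,m)-\frac{1}{m-2}P(G^*,m)\right)$. Then $P_{DP}(G,\mathcal{H})\geq P(G_0,m)-\max\{A_1,A_2,A_3,A_4,A_5\}$. Moreover, there exists an $m$-fold cover $\mathcal{H}^*$ of $G$ with $P_{DP}(G,\mathcal{H}^* )=P(G_0,m)-\max\{A_1,A_2,A_3,A_4,A_5\}$.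
   Context: All graphs are finite and simple; $G-F$ denotes deletion of the edge set $F$. $P(G,m)$ denotes the chromatic polynomial of $G$. A cover of a graph $G$ is a pair $\mathcal{H}=(L,H)$ where $H$ is a graph and $L:V(G)\to\mathcal{P}(V(H))$ satisfies: (1) the sets $L(u)$, $u\in V(G)$, partition $V(H)$; (2) for every $u$, $H[L(u)]$ is complete; (3) if $E_H(L(u),L(v))\neq\emptyset$ then $u=v$ or $uv\in E(G)$; (4) if $uv\in E(G)$ then $E_H(L(u),L(v))$ is a matching (possibly empty). Here $E_H(S,U)$ is the set of edges of $H$ between $S$ and $U$. The cover is $m$-fold if $|L(u)|=m$ for all $u$. An $\mathcal{H}$-coloring is an independent set of $H$ of size $|V(G)|$; $P_{DP}(G,\mathcal{H})$ is the number of $\mathcal{H}$-colorings. For an $m$-fold cover $\mathcal{H}=(L,H)$ of $G$, we say there is a natural bijection between the $\mathcal{H}$-colorings of $G$ and the proper $m$-colorings of $G$ if the elements of each $L(v)$ can be labeled $L(v)=\{(v,j):j\in[m]\}$ so that whenever $uv\in E(G)$, $(u,j)$ and $(v,j)$ are adjacent in $H$ for every $j\in[m]$. *)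

theory Defs
  imports Complex_Main "HOL-Library.FuncSet"
begin

definition simple_graph :: "'a set \<Rightarrow> 'a set set \<Rightarrow> bool" where
  "simple_graph V E \<longleftrightarrow> finite V \<and> (\<forall>e\<in>E. \<exists>u v. e = {u, v} \<and> u \<noteq> v \<and> u \<in> V \<and> v \<in> V)"

definition proper_colorings :: "'a set \<Rightarrow> 'a set set \<Rightarrow> nat \<Rightarrow> ('a \<Rightarrow> nat) set" where
  "proper_colorings V E m = {f \<in> V \<rightarrow>\<^sub>E {..<m}. \<forall>u v. {u, v} \<in> E \<longrightarrow> f u \<noteq> f v}"

definition chrom_poly :: "'a set \<Rightarrow> 'a set set \<Rightarrow> nat \<Rightarrow> nat" where
  "chrom_poly V E m = card (proper_colorings V E m)"

definition edges_between :: "'b set set \<Rightarrow> 'b set \<Rightarrow> 'b set \<Rightarrow> 'b set set" where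
  "edges_between EH S U = {e \<in> EH. \<exists>x\<in>S. \<exists>y\<in>U. e = {x, y}}"

definition is_cover :: "'a set \<Rightarrow> 'a set set \<Rightarrow> ('a \<Rightarrow> 'b set) \<Rightarrow> 'b set \<Rightarrow> 'b set set \<Rightarrow> bool" where
  "is_cover V E L VH EH \<longleftrightarrow>
     simple_graph VH EH \<and>
     \<comment> \<open>(1) the L(u) partition V(H)\<close>
     (\<Union>u\<in>V. L u) = VH \<and>
     (\<forall>u\<in>V. \<forall>v\<in>V. u \<noteq> v \<longrightarrow> L u \<inter> L v = {}) \<and>
     \<comment> \<open>(2) each H[L(u)] is complete\<close>
     (\<forall>u\<in>V. \<forall>x\<in>L u. \<forall>y\<in>L u. x \<noteq> y \<longrightarrow> {x, y} \<in> EH) \<and>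
     \<comment> \<open>(3) edges of H only between L(u), L(v) with u = v or uv an edge\<close>
     (\<forall>u\<in>V. \<forall>v\<in>V. edges_between EH (L u) (L v) \<noteq> {} \<longrightarrow> u = v \<or> {u, v} \<in> E) \<and>
     \<comment> \<open>(4) for uv an edge, E_H(L(u),L(v)) is a matching\<close>
     (\<forall>u\<in>V. \<forall>v\<in>V. {u, v} \<in> E \<longrightarrow>
        (\<forall>e1\<in>edges_between EH (L u) (L v). \<forall>e2\<in>edges_between EH (L u) (L v).
            e1 \<noteq> e2 \<longrightarrow> e1 \<inter> e2 = {}))"

definition is_mfold_cover :: "'a set \<Rightarrow> 'a set set \<Rightarrow> nat \<Rightarrow> ('a \<Rightarrow> 'b set) \<Rightarrow> 'b set \<Rightarrow> 'b set set \<Rightarrow> bool" where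
  "is_mfold_cover V E m L VH EH \<longleftrightarrow> is_cover V E L VH EH \<and> (\<forall>u\<in>V. card (L u) = m)"

definition independent_set :: "'b set \<Rightarrow> 'b set set \<Rightarrow> 'b set \<Rightarrow> bool" where
  "independent_set VH EH I \<longleftrightarrow> I \<subseteq> VH \<and> (\<forall>x\<in>I. \<forall>y\<in>I. {x, y} \<notin> EH)"

definition dp_colorings :: "'a set \<Rightarrow> 'b set \<Rightarrow> 'b set set \<Rightarrow> 'b set set" where
  "dp_colorings V VH EH = {I. independent_set VH EH I \<and> card I = card V}"

definition P_DP :: "'a set \<Rightarrow> 'b set \<Rightarrow> 'b set set \<Rightarrow> nat" where
  "P_DP V VH EH = card (dp_colorings V VH EH)"

definition natural_bijection :: "'a set \<Rightarrow> 'a set set \<Rightarrow> nat \<Rightarrow> ('a \<Rightarrow> 'b set) \<Rightarrow> 'b set set \<Rightarrow> bool" where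
  "natural_bijection V E m L EH \<longleftrightarrow>
     (\<exists>lab :: 'a \<Rightarrow> nat \<Rightarrow> 'b.
        (\<forall>v\<in>V. bij_betw (lab v) {..<m} (L v)) \<and>
        (\<forall>u\<in>V. \<forall>v\<in>V. {u, v} \<in> E \<longrightarrow> (\<forall>j<m. {lab u j, lab v j} \<in> EH)))"

end

theory Submission
  imports Defs
begin

lemma fiber_card:
  assumes "finite S" "\<And>x. x \<in> S \<Longrightarrow> h x < (m::nat)"
  shows "card S = (\<Sum>i<m. card {x\<in>S. h x = i})"
proof -
  have "S = (\<Union>i\<in>{..<m}. {x\<in>S. h x = i})" using assms(2) by auto
  hence "card S = card (\<Union>i\<in>{..<m}. {x\<in>S. h x = i})" by simp
  also have "\<dots> = (\<Sum>i<m. card {x\<in>S. h x = i})"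
    by (rule card_UN_disjoint) (use assms(1) in auto)
  finally show ?thesis .
qed

lemma sum_one:
  assumes "a < m" "\<And>k. k < m \<Longrightarrow> k \<noteq> a \<Longrightarrow> \<phi> k = (c::real)"
  shows "(\<Sum>k<m. \<phi> k) = \<phi> a + (real m - 1) * c"
proof -
  have "(\<Sum>k<m. \<phi> k) = \<phi> a + (\<Sum>k\<in>{..<m} - {a}. \<phi> k)"
    using assms(1) by (simp add: sum.remove)
  also have "(\<Sum>k\<in>{..<m} - {a}. \<phi> k) = (\<Sum>k\<in>{..<m} - {a}. c)"
    using assms(2) by (intro sum.cong) auto
  also have "\<dots> = (real m - 1) * c" using assms(1) by (simp add: of_nat_diff)
  finally show ?thesis .
qed

lemma sum_two:
  assumes "a < m" "b < m" "a \<noteq> b" "\<And>k. k < m \<Longrightarrow> k \<noteq> a \<Longrightarrow> k \<noteq> b \<Longrightarrow> \<phi> k = (c::real)"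
  shows "(\<Sum>k<m. \<phi> k) = \<phi> a + \<phi> b + (real m - 2) * c"
proof -
  have "(\<Sum>k<m. \<phi> k) = \<phi> a + (\<Sum>k\<in>{..<m} - {a}. \<phi> k)"
    using assms(1) by (simp add: sum.remove)
  also have "(\<Sum>k\<in>{..<m} - {a}. \<phi> k) = \<phi> b + (\<Sum>k\<in>{..<m} - {a} - {b}. \<phi> k)"
    using assms by (subst sum.remove[of _ b]) auto
  also have "(\<Sum>k\<in>{..<m} - {a} - {b}. \<phi> k) = (\<Sum>k\<in>{..<m} - {a} - {b}. c)"
    using assms(4) by (intro sum.cong) auto
  also have "\<dots> = (real m - 2) * c" using assms(1,2,3) by (simp add: of_nat_diff)
  finally show ?thesis by simp
qed

definition pat :: "'x \<Rightarrow> 'x \<Rightarrow> 'x \<Rightarrow> 'x \<Rightarrow> 'x \<Rightarrow> nat \<Rightarrow> nat \<Rightarrow> nat \<Rightarrow> 'x" where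
  "pat f1 f2 f3 f4 f5 i j k = (if i = j then (if j = k then f1 else f2) else if j = k then f3 else if i = k then f4 else f5)"

lemma patsum:
  assumes "\<And>i j k. i < m \<Longrightarrow> j < m \<Longrightarrow> k < m \<Longrightarrow> F i j k = pat f1 f2 f3 f4 f5 i j k"
  shows "(\<Sum>i<m. \<Sum>j<m. \<Sum>k<m. F i j k) =
     real m * f1 + real m * (real m - 1) * (f2 + f3 + f4) + real m * (real m - 1) * (real m - 2) * (f5::real)"
proof -
  have inner: "(\<Sum>k<m. F i j k) = (if i = j then f1 + (real m - 1) * f2 else f4 + f3 + (real m - 2) * f5)"
    if "i < m" "j < m" for i j
  proof (cases "i = j")
    case True
    then show ?thesis using that by (subst sum_one[of i _ _ f2]) (auto simp: assms pat_def)
  next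
    case False
    then show ?thesis using that by (subst sum_two[of i m j _ f5]) (auto simp: assms pat_def)
  qed
  have mid: "(\<Sum>j<m. \<Sum>k<m. F i j k) = f1 + (real m - 1) * f2 + (real m - 1) * (f4 + f3 + (real m - 2) * f5)"
    if "i < m" for i
    using that by (subst sum_one[of i]) (auto simp: inner)
  have "(\<Sum>i<m. \<Sum>j<m. \<Sum>k<m. F i j k) = (\<Sum>i<m. f1 + (real m - 1) * f2 + (real m - 1) * (f4 + f3 + (real m - 2) * f5))"
    by (intro sum.cong) (auto simp: mid)
  also have "\<dots> = real m * (f1 + (real m - 1) * f2 + (real m - 1) * (f4 + f3 + (real m - 2) * f5))" by simp
  finally show ?thesis by (simp add: algebra_simps)
qed

definition sw :: "nat \<Rightarrow> nat \<Rightarrow> nat \<Rightarrow> nat" where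
  "sw a b x = (if x = a then b else if x = b then a else x)"

lemma sw_sw[simp]: "sw a b (sw a b x) = x" by (auto simp: sw_def)
lemma sw_inj[simp]: "(sw a b x = sw a b y) = (x = y)" by (auto simp: sw_def)
lemma sw_lt: "a < m \<Longrightarrow> b < m \<Longrightarrow> x < m \<Longrightarrow> sw a b x < (m::nat)" by (auto simp: sw_def)

lemma proper_insert:
  "proper_colorings V (F \<union> {{a, b}}) m = {f \<in> proper_colorings V F m. f a \<noteq> f b}"
  unfolding proper_colorings_def by (auto simp: doubleton_eq_iff)

locale setting =
  fixes V :: "'a set" and E :: "'a set set" and m :: nat and a1 a2 a3 :: 'a
  assumes G: "simple_graph V E"
    and m3: "m \<ge> 3"
    and pth: "a1 \<in> V" "a2 \<in> V" "a3 \<in> V" "a1 \<noteq> a2" "a2 \<noteq> a3" "a1 \<noteq> a3"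
      "{a1, a2} \<in> E" "{a2, a3} \<in> E"
    and nonadj: "{a1, a3} \<notin> E"
begin

definition "E0 = E - {{a1, a2}, {a2, a3}}"
definition "C0 = proper_colorings V E0 m"
definition "W i j k = card {f\<in>C0. f a1 = i \<and> f a2 = j \<and> f a3 = k}"
definition "w i j k = real (W i j k)"

lemma finV: "finite V" using G by (simp add: simple_graph_def)

lemma finC0: "finite C0"
proof -
  have "C0 \<subseteq> V \<rightarrow>\<^sub>E {..<m}" by (auto simp: C0_def proper_colorings_def)
  moreover have "finite (V \<rightarrow>\<^sub>E {..<m})" using finV by (simp add: finite_PiE)
  ultimately show ?thesis by (rule finite_subset)
qed

lemma EV: assumes "{u, v} \<in> E" shows "u \<in> V \<and> v \<in> V \<and> u \<noteq> v"
proof -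
  obtain x y where "{u, v} = {x, y}" "x \<noteq> y" "x \<in> V" "y \<in> V"
    using assms G unfolding simple_graph_def by blast
  then show ?thesis unfolding doubleton_eq_iff by auto
qed

lemma E0V: "{u, v} \<in> E0 \<Longrightarrow> u \<in> V \<and> v \<in> V"
  using EV unfolding E0_def by blast

lemma C0_lt: "f \<in> C0 \<Longrightarrow> v \<in> V \<Longrightarrow> f v < m"
  by (auto simp: C0_def proper_colorings_def)

lemma W_le_sw:
  assumes "a < m" "b < m"
  shows "W i j k \<le> W (sw a b i) (sw a b j) (sw a b k)"
proof -
  define \<Phi> where "\<Phi> f = (\<lambda>v. if v \<in> V then sw a b (f v) else undefined)" for f :: "'a \<Rightarrow> nat"
  let ?A = "{f\<in>C0. f a1 = i \<and> f a2 = j \<and> f a3 = k}"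
  let ?B = "{f\<in>C0. f a1 = sw a b i \<and> f a2 = sw a b j \<and> f a3 = sw a b k}"
  note E0V = E0V
  have "inj_on \<Phi> ?A"
  proof (rule inj_onI)
    fix f g assume f: "f \<in> ?A" and g: "g \<in> ?A" and e: "\<Phi> f = \<Phi> g"
    show "f = g"
    proof
      fix v show "f v = g v"
      proof (cases "v \<in> V")
        case True
        then have "sw a b (f v) = sw a b (g v)" using fun_cong[OF e, of v] by (simp add: \<Phi>_def)
        then show ?thesis by simp
      next
        case False
        then show ?thesis using f g by (auto simp: C0_def proper_colorings_def PiE_def extensional_def)
      qed
    qed
  qed
  moreover have "\<Phi> ` ?A \<subseteq> ?B"
  proof
    fix h assume "h \<in> \<Phi> ` ?A"
    then obtain f where f: "f \<in> ?A" and h: "h = \<Phi> f" by auto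
    have "h \<in> C0"
      unfolding C0_def proper_colorings_def
    proof (intro CollectI conjI allI impI)
      show "h \<in> V \<rightarrow>\<^sub>E {..<m}" using f assms unfolding h \<Phi>_def
        by (auto simp: C0_def proper_colorings_def intro!: sw_lt)
      fix u v assume "{u, v} \<in> E0"
      then have "f u \<noteq> f v" using f by (auto simp: C0_def proper_colorings_def)
      then show "h u \<noteq> h v" using E0V[OF \<open>{u, v} \<in> E0\<close>] unfolding h \<Phi>_def by simp
    qed
    then show "h \<in> ?B" using f pth unfolding h \<Phi>_def by auto
  qed
  moreover have "finite ?B" using finC0 by simp
  ultimately show ?thesis unfolding W_def by (rule card_inj_on_le)
qed

lemma W_sw:
  assumes "a < m" "b < m"
  shows "W (sw a b i) (sw a b j) (sw a b k) = W i j k"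
  using W_le_sw[OF assms, of i j k] W_le_sw[OF assms, of "sw a b i" "sw a b j" "sw a b k"] by simp

lemma W_canon1: "i < m \<Longrightarrow> W i j k = W 0 (sw i 0 j) (sw i 0 k)"
  using W_sw[of i 0 i j k] m3 by (simp add: sw_def)

lemma W_canon2: "j < m \<Longrightarrow> j \<noteq> 0 \<Longrightarrow> W 0 j k = W 0 1 (sw j 1 k)"
  using W_sw[of j 1 0 j k] m3 by (simp add: sw_def)

lemma W_canon3: "k < m \<Longrightarrow> k \<noteq> 0 \<Longrightarrow> k \<noteq> 1 \<Longrightarrow> W 0 1 k = W 0 1 2"
  using W_sw[of k 2 0 1 k] m3 by (simp add: sw_def)

lemma W_canon4: "k < m \<Longrightarrow> k \<noteq> 0 \<Longrightarrow> W 0 0 k = W 0 0 1"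
  using W_sw[of k 1 0 0 k] m3 by (simp add: sw_def)

lemma pat_sw[simp]: "pat F1 F2 F3 F4 F5 (sw a b i) (sw a b j) (sw a b k) = pat F1 F2 F3 F4 F5 i j k"
  by (simp add: pat_def)

abbreviation "WP \<equiv> pat (W 0 0 0) (W 0 0 1) (W 0 1 1) (W 0 1 0) (W 0 1 2)"

lemma Wpat00: "k < m \<Longrightarrow> W 0 0 k = WP 0 0 k"
  using W_canon4[of k] by (cases "k = 0") (auto simp: pat_def)

lemma Wpat01: "k < m \<Longrightarrow> W 0 1 k = WP 0 1 k"
  using W_canon3[of k] by (cases "k = 0 \<or> k = 1") (auto simp: pat_def)

lemma Wpat0: assumes "j < m" "k < m" shows "W 0 j k = WP 0 j k"
proof (cases "j = 0")
  case True show ?thesis unfolding True by (rule Wpat00[OF assms(2)])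
next
  case False
  have "W 0 j k = W 0 1 (sw j 1 k)" using W_canon2 assms False by blast
  also have "\<dots> = WP 0 1 (sw j 1 k)"
  proof (rule Wpat01)
    show "sw j 1 k < m" using assms m3 by (intro sw_lt) auto
  qed
  also have "\<dots> = WP 0 j k"
  proof -
    have "sw j 1 0 = 0" "sw j 1 j = 1" using False by (auto simp: sw_def)
    moreover have "WP (sw j 1 0) (sw j 1 j) (sw j 1 k) = WP 0 j k" by (rule pat_sw)
    ultimately show ?thesis by metis
  qed
  finally show ?thesis .
qed

lemma Wpat: assumes "i < m" "j < m" "k < m"
  shows "W i j k = WP i j k"
proof -
  have "W i j k = W 0 (sw i 0 j) (sw i 0 k)" using W_canon1 assms by blast
  also have "\<dots> = WP 0 (sw i 0 j) (sw i 0 k)" using assms m3 by (intro Wpat0 sw_lt) auto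
  also have "\<dots> = WP i j k"
  proof -
    have "sw i 0 i = 0" by (simp add: sw_def)
    moreover have "WP (sw i 0 i) (sw i 0 j) (sw i 0 k) = WP i j k" by (rule pat_sw)
    ultimately show ?thesis by metis
  qed
  finally show ?thesis .
qed


definition "xx = w 0 0 0"
definition "pp = w 0 0 1"
definition "qq = w 0 1 1"
definition "rr = w 0 1 0"
definition "ss = w 0 1 2"

lemma wv: assumes "i < m" "j < m" "k < m"
  shows "w i j k = (if i = j then (if j = k then xx else pp) else if j = k then qq else if i = k then rr else ss)"
  unfolding w_def Wpat[OF assms] xx_def pp_def qq_def rr_def ss_def w_def pat_def by simp

lemma cnt: "real (card {f\<in>C0. Q (f a1) (f a2) (f a3)}) = (\<Sum>i<m. \<Sum>j<m. \<Sum>k<m. if Q i j k then w i j k else 0)"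
proof -
  let ?S = "{f\<in>C0. Q (f a1) (f a2) (f a3)}"
  have fS: "finite ?S" using finC0 by simp
  have "card ?S = (\<Sum>i<m. card {f\<in>?S. f a1 = i})"
    by (rule fiber_card) (use finC0 C0_lt pth in auto)
  also have "\<dots> = (\<Sum>i<m. \<Sum>j<m. card {f\<in>{f\<in>?S. f a1 = i}. f a2 = j})"
    by (intro sum.cong refl fiber_card) (use finC0 C0_lt pth in auto)
  also have "\<dots> = (\<Sum>i<m. \<Sum>j<m. \<Sum>k<m. card {f\<in>{f\<in>{f\<in>?S. f a1 = i}. f a2 = j}. f a3 = k})"
    by (intro sum.cong refl fiber_card) (use finC0 C0_lt pth in auto)
  also have "\<dots> = (\<Sum>i<m. \<Sum>j<m. \<Sum>k<m. if Q i j k then W i j k else 0)"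
  proof (intro sum.cong refl)
    fix i j k
    show "card {f\<in>{f\<in>{f\<in>?S. f a1 = i}. f a2 = j}. f a3 = k} = (if Q i j k then W i j k else 0)"
    proof (cases "Q i j k")
      case True
      then have "{f\<in>{f\<in>{f\<in>?S. f a1 = i}. f a2 = j}. f a3 = k} = {f\<in>C0. f a1 = i \<and> f a2 = j \<and> f a3 = k}" by auto
      then show ?thesis using True by (simp add: W_def)
    next
      case False
      have X: "{f\<in>{f\<in>{f\<in>?S. f a1 = i}. f a2 = j}. f a3 = k} = {}" using False by auto
      show ?thesis unfolding X using False by simp
    qed
  qed
  finally have h: "card ?S = (\<Sum>i<m. \<Sum>j<m. \<Sum>k<m. if Q i j k then W i j k else 0)" .
  show ?thesis unfolding h of_nat_sum w_def by (intro sum.cong refl) simp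
qed

lemma cnt_pat:
  assumes "\<And>i j k. Q i j k = pat b1 b2 b3 b4 b5 i j k"
  shows "real (card {f\<in>C0. Q (f a1) (f a2) (f a3)}) =
    real m * (if b1 then xx else 0) + real m * (real m - 1) * ((if b2 then pp else 0) + (if b3 then qq else 0) + (if b4 then rr else 0))
    + real m * (real m - 1) * (real m - 2) * (if b5 then ss else 0)"
  unfolding cnt
proof (rule patsum)
  fix i j k assume "i < m" "j < m" "k < m"
  then show "(if Q i j k then w i j k else 0) = pat (if b1 then xx else 0) (if b2 then pp else 0) (if b3 then qq else 0) (if b4 then rr else 0) (if b5 then ss else 0) i j k"
    unfolding wv[OF \<open>i < m\<close> \<open>j < m\<close> \<open>k < m\<close>] assms pat_def by auto
qed

definition "gg i j k = real (card {f\<in>C0. f a2 = j \<and> (f a1 = i \<or> f a3 = k)})"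

lemma gg_sum: "gg i j k = (\<Sum>c<m. w i j c) + (\<Sum>c<m. w c j k) - w i j k"
proof -
  let ?A = "{f\<in>C0. f a1 = i \<and> f a2 = j}" and ?B = "{f\<in>C0. f a2 = j \<and> f a3 = k}"
  have fA: "finite ?A" "finite ?B" using finC0 by auto
  have U: "{f\<in>C0. f a2 = j \<and> (f a1 = i \<or> f a3 = k)} = ?A \<union> ?B" by auto
  have I: "?A \<inter> ?B = {f\<in>C0. f a1 = i \<and> f a2 = j \<and> f a3 = k}" by auto
  have cA: "card ?A = (\<Sum>c<m. W i j c)"
  proof -
    have "card ?A = (\<Sum>c<m. card {f\<in>?A. f a3 = c})"
      by (rule fiber_card) (use fA C0_lt pth in auto)
    also have "\<dots> = (\<Sum>c<m. W i j c)" unfolding W_def by (intro sum.cong refl arg_cong[where f=card]) auto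
    finally show ?thesis .
  qed
  have cB: "card ?B = (\<Sum>c<m. W c j k)"
  proof -
    have "card ?B = (\<Sum>c<m. card {f\<in>?B. f a1 = c})"
      by (rule fiber_card) (use fA C0_lt pth in auto)
    also have "\<dots> = (\<Sum>c<m. W c j k)" unfolding W_def by (intro sum.cong refl arg_cong[where f=card]) auto
    finally show ?thesis .
  qed
  have h: "real (card ?A) + real (card ?B) = real (card (?A \<union> ?B)) + real (card (?A \<inter> ?B))"
    using arg_cong[where f=real, OF card_Un_Int[OF fA]] unfolding of_nat_add .
  have "gg i j k = real (card ?A) + real (card ?B) - real (card (?A \<inter> ?B))"
    unfolding gg_def U using h by linarith
  also have "\<dots> = (\<Sum>c<m. w i j c) + (\<Sum>c<m. w c j k) - w i j k"
    unfolding cA cB I w_def of_nat_sum W_def[symmetric] ..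
  finally show ?thesis .
qed

abbreviation "M \<equiv> real m * (real m - 1)"

lemma gg_val:
  assumes "i < m" "j < m" "k < m"
  shows "real m * gg i j k = pat
     (real m * xx + M * (pp + qq))
     (real m * xx + M * pp + real m * rr + real m * (real m - 2) * ss)
     (real m * xx + M * qq + real m * rr + real m * (real m - 2) * ss)
     (real m * (pp + qq + rr) + 2 * real m * (real m - 2) * ss)
     (real m * (pp + qq + 2 * rr) + real m * (2 * real m - 5) * ss) i j k"
proof -
  consider "i = j" "j = k" | "i = j" "j \<noteq> k" | "i \<noteq> j" "j = k" | "i \<noteq> j" "j \<noteq> k" "i = k"
    | "i \<noteq> j" "j \<noteq> k" "i \<noteq> k" by blast
  then show ?thesis
  proof cases
    case 1
    have s1: "(\<Sum>c<m. w i j c) = xx + (real m - 1) * pp"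
      by (subst sum_one[of i m _ pp]) (use assms 1 in \<open>auto simp: wv\<close>)
    have s2: "(\<Sum>c<m. w c j k) = xx + (real m - 1) * qq"
      by (subst sum_one[of i m _ qq]) (use assms 1 in \<open>auto simp: wv\<close>)
    have w: "w i j k = xx" using assms 1 by (simp add: wv)
    show ?thesis unfolding gg_sum s1 s2 w using 1 by (simp add: pat_def algebra_simps)
  next
    case 2
    have s1: "(\<Sum>c<m. w i j c) = xx + (real m - 1) * pp"
      by (subst sum_one[of i m _ pp]) (use assms 2 in \<open>auto simp: wv\<close>)
    have s2: "(\<Sum>c<m. w c j k) = pp + rr + (real m - 2) * ss"
      by (subst sum_two[of j m k _ ss]) (use assms 2 in \<open>auto simp: wv\<close>)
    have w: "w i j k = pp" using assms 2 by (simp add: wv)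
    show ?thesis unfolding gg_sum s1 s2 w using 2 by (simp add: pat_def algebra_simps)
  next
    case 3
    have s1: "(\<Sum>c<m. w i j c) = rr + qq + (real m - 2) * ss"
      by (subst sum_two[of i m j _ ss]) (use assms 3 in \<open>auto simp: wv\<close>)
    have s2: "(\<Sum>c<m. w c j k) = xx + (real m - 1) * qq"
      by (subst sum_one[of j m _ qq]) (use assms 3 in \<open>auto simp: wv\<close>)
    have w: "w i j k = qq" using assms 3 by (simp add: wv)
    show ?thesis unfolding gg_sum s1 s2 w using 3 by (simp add: pat_def algebra_simps)
  next
    case 4
    have s1: "(\<Sum>c<m. w i j c) = rr + qq + (real m - 2) * ss"
      by (subst sum_two[of i m j _ ss]) (use assms 4 in \<open>auto simp: wv\<close>)
    have s2: "(\<Sum>c<m. w c j k) = pp + rr + (real m - 2) * ss"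
      by (subst sum_two[of j m k _ ss]) (use assms 4 in \<open>auto simp: wv\<close>)
    have w: "w i j k = rr" using assms 4 by (simp add: wv)
    show ?thesis unfolding gg_sum s1 s2 w using 4 by (simp add: pat_def algebra_simps)
  next
    case 5
    have s1: "(\<Sum>c<m. w i j c) = rr + qq + (real m - 2) * ss"
      by (subst sum_two[of i m j _ ss]) (use assms 5 in \<open>auto simp: wv\<close>)
    have s2: "(\<Sum>c<m. w c j k) = pp + rr + (real m - 2) * ss"
      by (subst sum_two[of j m k _ ss]) (use assms 5 in \<open>auto simp: wv\<close>)
    have w: "w i j k = ss" using assms 5 by (simp add: wv)
    show ?thesis unfolding gg_sum s1 s2 w using 5 by (simp add: pat_def algebra_simps)
  qed
qed


lemma e12_ne: "{a1, a2} \<noteq> {a2, a3}" using pth by (auto simp: doubleton_eq_iff)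

lemma E_split: "E = E0 \<union> {{a1, a2}} \<union> {{a2, a3}}" using pth by (auto simp: E0_def)
lemma E_m1: "E - {{a1, a2}} = E0 \<union> {{a2, a3}}" using pth e12_ne by (auto simp: E0_def)
lemma E_m2: "E - {{a2, a3}} = E0 \<union> {{a1, a2}}" using pth e12_ne by (auto simp: E0_def)
lemma E_s: "E \<union> {{a1, a3}} = E0 \<union> {{a1, a2}} \<union> {{a2, a3}} \<union> {{a1, a3}}" using pth by (auto simp: E0_def)

definition "P0v = real m * xx + M * (pp + qq + rr) + M * (real m - 2) * ss"
definition "PGv = M * rr + M * (real m - 2) * ss"
definition "P1v = M * (pp + rr) + M * (real m - 2) * ss"
definition "P2v = M * (qq + rr) + M * (real m - 2) * ss"
definition "Psv = M * (real m - 2) * ss"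

lemma P0: "real (chrom_poly V E0 m) = P0v"
proof -
  have "real (chrom_poly V E0 m) = real (card {f\<in>C0. (\<lambda>i j k. True) (f a1) (f a2) (f a3)})"
    by (simp add: chrom_poly_def C0_def)
  also have "\<dots> = P0v" by (subst cnt_pat[of _ True True True True True]) (auto simp: pat_def P0v_def algebra_simps)
  finally show ?thesis .
qed

lemma PG: "real (chrom_poly V E m) = PGv"
proof -
  have Eq: "proper_colorings V (E) m = proper_colorings V (E0 \<union> {{a1, a2}} \<union> {{a2, a3}}) m" by (metis E_split)
  have "proper_colorings V E m = {f\<in>C0. (\<lambda>i j k. i \<noteq> j \<and> j \<noteq> k) (f a1) (f a2) (f a3)}"
    unfolding Eq unfolding proper_insert C0_def by auto
  then have "real (chrom_poly V E m) = real (card {f\<in>C0. (\<lambda>i j k. i \<noteq> j \<and> j \<noteq> k) (f a1) (f a2) (f a3)})"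
    by (simp add: chrom_poly_def)
  also have "\<dots> = PGv" by (subst cnt_pat[of _ False False False True True]) (auto simp: pat_def PGv_def algebra_simps)
  finally show ?thesis .
qed

lemma P1: "real (chrom_poly V (E - {{a1, a2}}) m) = P1v"
proof -
  have Eq: "proper_colorings V (E - {{a1, a2}}) m = proper_colorings V (E0 \<union> {{a2, a3}}) m" by (metis E_m1)
  have "proper_colorings V (E - {{a1, a2}}) m = {f\<in>C0. (\<lambda>i j k. j \<noteq> k) (f a1) (f a2) (f a3)}"
    unfolding Eq unfolding proper_insert C0_def by auto
  then have "real (chrom_poly V (E - {{a1, a2}}) m) = real (card {f\<in>C0. (\<lambda>i j k. j \<noteq> k) (f a1) (f a2) (f a3)})"
    by (simp add: chrom_poly_def)
  also have "\<dots> = P1v" by (subst cnt_pat[of _ False True False True True]) (auto simp: pat_def P1v_def algebra_simps)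
  finally show ?thesis .
qed

lemma P2: "real (chrom_poly V (E - {{a2, a3}}) m) = P2v"
proof -
  have Eq: "proper_colorings V (E - {{a2, a3}}) m = proper_colorings V (E0 \<union> {{a1, a2}}) m" by (metis E_m2)
  have "proper_colorings V (E - {{a2, a3}}) m = {f\<in>C0. (\<lambda>i j k. i \<noteq> j) (f a1) (f a2) (f a3)}"
    unfolding Eq unfolding proper_insert C0_def by auto
  then have "real (chrom_poly V (E - {{a2, a3}}) m) = real (card {f\<in>C0. (\<lambda>i j k. i \<noteq> j) (f a1) (f a2) (f a3)})"
    by (simp add: chrom_poly_def)
  also have "\<dots> = P2v" by (subst cnt_pat[of _ False False True True True]) (auto simp: pat_def P2v_def algebra_simps)
  finally show ?thesis .
qed

lemma Ps: "real (chrom_poly V (E \<union> {{a1, a3}}) m) = Psv"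
proof -
  have Eq: "proper_colorings V (E \<union> {{a1, a3}}) m = proper_colorings V (E0 \<union> {{a1, a2}} \<union> {{a2, a3}} \<union> {{a1, a3}}) m" by (metis E_s)
  have "proper_colorings V (E \<union> {{a1, a3}}) m = {f\<in>C0. (\<lambda>i j k. i \<noteq> j \<and> j \<noteq> k \<and> i \<noteq> k) (f a1) (f a2) (f a3)}"
    unfolding Eq unfolding proper_insert C0_def by auto
  then have "real (chrom_poly V (E \<union> {{a1, a3}}) m) = real (card {f\<in>C0. (\<lambda>i j k. i \<noteq> j \<and> j \<noteq> k \<and> i \<noteq> k) (f a1) (f a2) (f a3)})"
    by (simp add: chrom_poly_def)
  also have "\<dots> = Psv" by (subst cnt_pat[of _ False False False False True]) (auto simp: pat_def Psv_def algebra_simps)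
  finally show ?thesis .
qed

definition "A1v = real m * xx + M * (pp + qq)"
definition "A2v = real m * xx + M * pp + real m * rr + real m * (real m - 2) * ss"
definition "A3v = real m * xx + M * qq + real m * rr + real m * (real m - 2) * ss"
definition "A4v = real m * (pp + qq + rr) + 2 * real m * (real m - 2) * ss"
definition "A5v = real m * (pp + qq + 2 * rr) + real m * (2 * real m - 5) * ss"

lemma m1: "real m - 1 \<noteq> 0" "real m - 2 \<noteq> 0" "real m \<noteq> 0" using m3 by auto

lemma A1: "P0v - PGv = A1v" unfolding P0v_def PGv_def A1v_def by (simp add: algebra_simps)
lemma A2: "P0v - P2v + PGv / (real m - 1) = A2v"
  unfolding P0v_def PGv_def P2v_def A2v_def using m1 by (simp add: field_simps)
lemma A3: "P0v - P1v + PGv / (real m - 1) = A3v"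
  unfolding P0v_def PGv_def P1v_def A3v_def using m1 by (simp add: field_simps)
lemma A4: "(P1v + P2v + Psv - PGv) / (real m - 1) = A4v"
  unfolding P1v_def P2v_def Psv_def PGv_def A4v_def using m1 by (simp add: field_simps)
lemma A5: "(P1v + P2v - Psv / (real m - 2)) / (real m - 1) = A5v"
proof -
  have "Psv / (real m - 2) = M * ss" unfolding Psv_def using m1 by (simp add: field_simps)
  moreover have "P1v + P2v - M * ss = (real m - 1) * A5v" unfolding P1v_def P2v_def A5v_def by (simp add: algebra_simps)
  ultimately show ?thesis using m1 by simp
qed

lemma gg_pat: "i < m \<Longrightarrow> j < m \<Longrightarrow> k < m \<Longrightarrow> real m * gg i j k = pat A1v A2v A3v A4v A5v i j k"
  unfolding A1v_def A2v_def A3v_def A4v_def A5v_def by (rule gg_val)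


abbreviation "Amax \<equiv> Max {A1v, A2v, A3v, A4v, A5v}"

lemma pat_le_Amax: "pat A1v A2v A3v A4v A5v i j k \<le> Amax"
  unfolding pat_def by (auto intro: Max_ge)

lemma bad_fiber: "card {f\<in>C0. R1 (f a1) (f a2) \<or> R2 (f a2) (f a3)} =
   (\<Sum>j<m. card {f\<in>C0. f a2 = j \<and> (f a1 = I j \<or> f a3 = K j)})"
  if "\<And>f. f \<in> C0 \<Longrightarrow> (R1 (f a1) (f a2) \<or> R2 (f a2) (f a3)) = (f a1 = I (f a2) \<or> f a3 = K (f a2))"
proof -
  let ?S = "{f\<in>C0. R1 (f a1) (f a2) \<or> R2 (f a2) (f a3)}"
  have "card ?S = (\<Sum>j<m. card {f\<in>?S. f a2 = j})"
    by (rule fiber_card) (use finC0 C0_lt pth in auto)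
  also have "\<dots> = (\<Sum>j<m. card {f\<in>C0. f a2 = j \<and> (f a1 = I j \<or> f a3 = K j)})"
  proof (intro sum.cong refl arg_cong[where f=card])
    fix j show "{f\<in>?S. f a2 = j} = {f\<in>C0. f a2 = j \<and> (f a1 = I j \<or> f a3 = K j)}"
      using that by auto
  qed
  finally show ?thesis .
qed

lemma sum_gg:
  assumes "\<And>j. j < m \<Longrightarrow> I j < m \<and> K j < m"
  shows "real (\<Sum>j<m. card {f\<in>C0. f a2 = j \<and> (f a1 = I j \<or> f a3 = K j)}) = (\<Sum>j<m. gg (I j) j (K j))"
  unfolding of_nat_sum gg_def ..

lemma gg_le: "i < m \<Longrightarrow> j < m \<Longrightarrow> k < m \<Longrightarrow> gg i j k \<le> Amax / real m"
  using gg_pat[of i j k] pat_le_Amax[of i j k] m1 m3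
  by (simp add: field_simps mult.commute)

lemma bad_le:
  assumes u1: "\<And>i i' j. i < m \<Longrightarrow> i' < m \<Longrightarrow> j < m \<Longrightarrow> R1 i j \<Longrightarrow> R1 i' j \<Longrightarrow> i = i'"
    and u2: "\<And>j k k'. j < m \<Longrightarrow> k < m \<Longrightarrow> k' < m \<Longrightarrow> R2 j k \<Longrightarrow> R2 j k' \<Longrightarrow> k = k'"
  shows "real (card {f\<in>C0. R1 (f a1) (f a2) \<or> R2 (f a2) (f a3)}) \<le> Amax"
proof -
  define I where "I j = (if \<exists>i<m. R1 i j then (SOME i. i < m \<and> R1 i j) else 0)" for j
  define K where "K j = (if \<exists>k<m. R2 j k then (SOME k. k < m \<and> R2 j k) else 0)" for j
  have m0: "0 < m" using m3 by simp
  have I1: "I j < m" for j unfolding I_def using m0 by (auto intro: someI2_ex)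
  have K1: "K j < m" for j unfolding K_def using m0 by (auto intro: someI2_ex)
  have I2: "i = I j" if "i < m" "j < m" "R1 i j" for i j
  proof -
    have ex: "\<exists>i<m. R1 i j" using that by blast
    then have "I j < m \<and> R1 (I j) j" unfolding I_def using someI_ex[of "\<lambda>i. i < m \<and> R1 i j"] by auto
    then show ?thesis using u1 that by blast
  qed
  have K2: "k = K j" if "k < m" "j < m" "R2 j k" for j k
  proof -
    have ex: "\<exists>k<m. R2 j k" using that by blast
    then have "K j < m \<and> R2 j (K j)" unfolding K_def using someI_ex[of "\<lambda>k. k < m \<and> R2 j k"] by auto
    then show ?thesis using u2 that by blast
  qed
  let ?S = "{f\<in>C0. R1 (f a1) (f a2) \<or> R2 (f a2) (f a3)}"
  have "card ?S = (\<Sum>j<m. card {f\<in>?S. f a2 = j})"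
    by (rule fiber_card) (use finC0 C0_lt pth in auto)
  also have "\<dots> \<le> (\<Sum>j<m. card {f\<in>C0. f a2 = j \<and> (f a1 = I j \<or> f a3 = K j)})"
  proof (intro sum_mono card_mono)
    fix j assume "j \<in> {..<m}"
    show "finite {f\<in>C0. f a2 = j \<and> (f a1 = I j \<or> f a3 = K j)}" using finC0 by simp
    show "{f\<in>?S. f a2 = j} \<subseteq> {f\<in>C0. f a2 = j \<and> (f a1 = I j \<or> f a3 = K j)}"
      using I2 K2 C0_lt pth by blast
  qed
  finally have c: "card ?S \<le> (\<Sum>j<m. card {f\<in>C0. f a2 = j \<and> (f a1 = I j \<or> f a3 = K j)})" .
  have "real (card ?S) \<le> real (\<Sum>j<m. card {f\<in>C0. f a2 = j \<and> (f a1 = I j \<or> f a3 = K j)})"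
    using c by (simp only: of_nat_le_iff)
  also have "\<dots> = (\<Sum>j<m. gg (I j) j (K j))" by (rule sum_gg) (use I1 K1 in auto)
  also have "\<dots> \<le> (\<Sum>j<m. Amax / real m)"
    by (rule sum_mono, rule gg_le) (auto simp: I1 K1)
  also have "\<dots> = Amax" using m1 by simp
  finally show ?thesis .
qed

lemma bad_eq:
  assumes r1: "\<And>i j. i < m \<Longrightarrow> j < m \<Longrightarrow> R1 i j = (i = I j)"
    and r2: "\<And>j k. j < m \<Longrightarrow> k < m \<Longrightarrow> R2 j k = (k = K j)"
    and lt: "\<And>j. j < m \<Longrightarrow> I j < m \<and> K j < m"
    and pv: "\<And>j. j < m \<Longrightarrow> pat A1v A2v A3v A4v A5v (I j) j (K j) = Av"
  shows "real (card {f\<in>C0. R1 (f a1) (f a2) \<or> R2 (f a2) (f a3)}) = Av"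
proof -
  have "card {f\<in>C0. R1 (f a1) (f a2) \<or> R2 (f a2) (f a3)} =
   (\<Sum>j<m. card {f\<in>C0. f a2 = j \<and> (f a1 = I j \<or> f a3 = K j)})"
  proof (rule bad_fiber)
    fix f assume "f \<in> C0"
    then have "f a1 < m" "f a2 < m" "f a3 < m" using C0_lt pth by auto
    then show "(R1 (f a1) (f a2) \<or> R2 (f a2) (f a3)) = (f a1 = I (f a2) \<or> f a3 = K (f a2))"
      using r1 r2 by auto
  qed
  then have "real (card {f\<in>C0. R1 (f a1) (f a2) \<or> R2 (f a2) (f a3)}) = real (\<Sum>j<m. card {f\<in>C0. f a2 = j \<and> (f a1 = I j \<or> f a3 = K j)})"
    by (rule arg_cong)
  also have "\<dots> = (\<Sum>j<m. gg (I j) j (K j))" by (rule sum_gg) (use lt in auto)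
  also have "\<dots> = (\<Sum>j<m. Av / real m)"
  proof (intro sum.cong refl)
    fix j assume "j \<in> {..<m}"
    then have "real m * gg (I j) j (K j) = Av" using gg_pat[of "I j" j "K j"] lt pv by auto
    then show "gg (I j) j (K j) = Av / real m" using m1 by (simp add: field_simps)
  qed
  also have "\<dots> = Av" using m1 by simp
  finally show ?thesis .
qed


end

context setting begin

lemma count:
  assumes cov: "is_mfold_cover V E m L VH EH"
    and lab: "\<And>v. v \<in> V \<Longrightarrow> bij_betw (lab v) {..<m} (L v)"
    and labE: "\<And>u v j. {u, v} \<in> E0 \<Longrightarrow> j < m \<Longrightarrow> {lab u j, lab v j} \<in> EH"
  shows "P_DP V VH EH = card {f\<in>C0. \<not> ({lab a1 (f a1), lab a2 (f a2)} \<in> EH \<or> {lab a2 (f a2), lab a3 (f a3)} \<in> EH)}"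
proof -
  let ?Good = "{f\<in>C0. \<not> ({lab a1 (f a1), lab a2 (f a2)} \<in> EH \<or> {lab a2 (f a2), lab a3 (f a3)} \<in> EH)}"
  have cv: "is_cover V E L VH EH" using cov by (simp add: is_mfold_cover_def)
  have sg: "simple_graph VH EH" using cv unfolding is_cover_def by simp
  have part: "(\<Union>u\<in>V. L u) = VH" using cv unfolding is_cover_def by simp
  have D: "\<forall>u\<in>V. \<forall>v\<in>V. u \<noteq> v \<longrightarrow> L u \<inter> L v = {}" using cv unfolding is_cover_def by simp
  have CL: "\<forall>u\<in>V. \<forall>x\<in>L u. \<forall>y\<in>L u. x \<noteq> y \<longrightarrow> {x, y} \<in> EH" using cv unfolding is_cover_def by simp
  have C3: "\<forall>u\<in>V. \<forall>v\<in>V. edges_between EH (L u) (L v) \<noteq> {} \<longrightarrow> u = v \<or> {u, v} \<in> E"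
    using cv unfolding is_cover_def by simp
  have C4: "\<forall>u\<in>V. \<forall>v\<in>V. {u, v} \<in> E \<longrightarrow>
        (\<forall>e1\<in>edges_between EH (L u) (L v). \<forall>e2\<in>edges_between EH (L u) (L v).
            e1 \<noteq> e2 \<longrightarrow> e1 \<inter> e2 = {})"
    using cv unfolding is_cover_def by simp
  have disj: "\<And>u v. u \<in> V \<Longrightarrow> v \<in> V \<Longrightarrow> u \<noteq> v \<Longrightarrow> L u \<inter> L v = {}" using D by blast
  have cl: "\<And>u x y. u \<in> V \<Longrightarrow> x \<in> L u \<Longrightarrow> y \<in> L u \<Longrightarrow> x \<noteq> y \<Longrightarrow> {x, y} \<in> EH" using CL by blast
  have c3: "\<And>u v. u \<in> V \<Longrightarrow> v \<in> V \<Longrightarrow> edges_between EH (L u) (L v) \<noteq> {} \<Longrightarrow> u = v \<or> {u, v} \<in> E"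
    using C3 by blast
  have c4: "\<And>u v e1 e2. u \<in> V \<Longrightarrow> v \<in> V \<Longrightarrow> {u, v} \<in> E \<Longrightarrow> e1 \<in> edges_between EH (L u) (L v)
        \<Longrightarrow> e2 \<in> edges_between EH (L u) (L v) \<Longrightarrow> e1 \<noteq> e2 \<Longrightarrow> e1 \<inter> e2 = {}"
    using C4 by blast
  have finVH: "finite VH" using sg by (simp add: simple_graph_def)
  have noloop: "{x, x} \<notin> EH" for x
  proof
    assume "{x, x} \<in> EH"
    then obtain u v where "{x, x} = {u, v}" "u \<noteq> v" using sg unfolding simple_graph_def by blast
    then show False by (auto simp: doubleton_eq_iff)
  qed
  have labL: "lab v j \<in> L v" if "v \<in> V" "j < m" for v j
    using lab[OF that(1)] that(2) by (auto dest: bij_betw_apply)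
  have labinj: "lab v j = lab v j' \<Longrightarrow> j < m \<Longrightarrow> j' < m \<Longrightarrow> j = j'" if "v \<in> V" for v j j'
    using lab[OF that] unfolding bij_betw_def inj_on_def by blast
  have labsurj: "\<exists>j<m. x = lab v j" if "v \<in> V" "x \<in> L v" for v x
    using lab[OF that(1)] that(2) unfolding bij_betw_def by auto
  have Lu: "u = v" if "u \<in> V" "v \<in> V" "x \<in> L u" "x \<in> L v" for u v x
    using disj[of u v] that by blast
  have key: "{lab u (f u), lab v (f v)} \<notin> EH" if f: "f \<in> ?Good" and uv: "u \<in> V" "v \<in> V" for f u v
  proof
    assume e: "{lab u (f u), lab v (f v)} \<in> EH"
    have fC: "f \<in> C0" using f by simp
    have lt: "f u < m" "f v < m" using C0_lt fC uv by auto
    show False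
    proof (cases "u = v")
      case True then show ?thesis using e noloop by simp
    next
      case False
      have eb: "{lab u (f u), lab v (f v)} \<in> edges_between EH (L u) (L v)"
        unfolding edges_between_def using e labL uv lt by blast
      then have uvE: "{u, v} \<in> E" using c3[OF uv] False by blast
      consider "{u, v} = {a1, a2}" | "{u, v} = {a2, a3}" | "{u, v} \<in> E0" using uvE unfolding E0_def by blast
      then show ?thesis
      proof cases
        case 1
        then have "{lab u (f u), lab v (f v)} = {lab a1 (f a1), lab a2 (f a2)}"
          by (auto simp: doubleton_eq_iff insert_commute)
        then show ?thesis using e f by simp
      next
        case 2
        then have "{lab u (f u), lab v (f v)} = {lab a2 (f a2), lab a3 (f a3)}"
          by (auto simp: doubleton_eq_iff insert_commute)
        then show ?thesis using e f by simp
      next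
        case 3
        have ne: "f u \<noteq> f v" using fC 3 by (auto simp: C0_def proper_colorings_def)
        have e': "{lab u (f u), lab v (f u)} \<in> EH" using labE[OF 3 lt(1)] .
        have eb': "{lab u (f u), lab v (f u)} \<in> edges_between EH (L u) (L v)"
          unfolding edges_between_def using e' labL uv lt by blast
        show ?thesis
        proof (cases "{lab u (f u), lab v (f v)} = {lab u (f u), lab v (f u)}")
          case True
          have "lab u (f u) \<noteq> lab v (f u)" using Lu[of u v] labL uv lt False by metis
          then have "lab v (f v) = lab v (f u)" using True by (auto simp: doubleton_eq_iff)
          then show ?thesis using labinj[OF uv(2)] lt ne by metis
        next
          case ne2: False
          have "{lab u (f u), lab v (f v)} \<inter> {lab u (f u), lab v (f u)} = {}"
            using c4[OF uv uvE eb eb' ne2] .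
          then show ?thesis by blast
        qed
      qed
    qed
  qed
  define \<Phi> where "\<Phi> f = (\<lambda>v. lab v (f v)) ` V" for f :: "'a \<Rightarrow> nat"
  have inj: "inj_on \<Phi> ?Good"
  proof (rule inj_onI)
    fix f g assume f: "f \<in> ?Good" and g: "g \<in> ?Good" and e: "\<Phi> f = \<Phi> g"
    show "f = g"
    proof
      fix v show "f v = g v"
      proof (cases "v \<in> V")
        case True
        have "lab v (f v) \<in> \<Phi> g" using e True unfolding \<Phi>_def by auto
        then obtain u where u: "u \<in> V" "lab v (f v) = lab u (g u)" unfolding \<Phi>_def by auto
        have lt: "f v < m" "g u < m" using C0_lt f g True u by auto
        have "u = v" using Lu[of u v "lab v (f v)"] u True labL lt by metis
        then show ?thesis using labinj[OF True] u lt by metis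
      next
        case False
        then show ?thesis using f g by (auto simp: C0_def proper_colorings_def PiE_def extensional_def)
      qed
    qed
  qed
  have img: "\<Phi> ` ?Good = dp_colorings V VH EH"
  proof
    show "\<Phi> ` ?Good \<subseteq> dp_colorings V VH EH"
    proof
      fix I assume "I \<in> \<Phi> ` ?Good"
      then obtain f where f: "f \<in> ?Good" and I: "I = \<Phi> f" by auto
      have lt: "v \<in> V \<Longrightarrow> f v < m" for v using C0_lt f by auto
      have sub: "I \<subseteq> VH" unfolding I \<Phi>_def using labL lt part by blast
      have ind: "\<forall>x\<in>I. \<forall>y\<in>I. {x, y} \<notin> EH" unfolding I \<Phi>_def using key[OF f] by blast
      have "inj_on (\<lambda>v. lab v (f v)) V"
        by (rule inj_onI) (use Lu labL lt in metis)
      then have "card I = card V" unfolding I \<Phi>_def by (rule card_image)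
      then show "I \<in> dp_colorings V VH EH"
        using sub ind unfolding dp_colorings_def independent_set_def by blast
    qed
  next
    show "dp_colorings V VH EH \<subseteq> \<Phi> ` ?Good"
    proof
      fix I assume "I \<in> dp_colorings V VH EH"
      then have sub: "I \<subseteq> VH" and ind: "\<And>x y. x \<in> I \<Longrightarrow> y \<in> I \<Longrightarrow> {x, y} \<notin> EH" and cI: "card I = card V"
        unfolding dp_colorings_def independent_set_def by blast+
      have finI: "finite I" using finite_subset[OF sub finVH] .
      define \<rho> where "\<rho> x = (SOME v. v \<in> V \<and> x \<in> L v)" for x
      have \<rho>: "\<rho> x \<in> V \<and> x \<in> L (\<rho> x)" if "x \<in> I" for x
      proof -
        have "\<exists>v. v \<in> V \<and> x \<in> L v" using that sub part by blast
        then show ?thesis unfolding \<rho>_def by (rule someI_ex)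
      qed
      have uniq: "x = y" if "x \<in> I" "y \<in> I" "v \<in> V" "x \<in> L v" "y \<in> L v" for x y v
        using cl[of v x y] ind[of x y] that by blast
      have "inj_on \<rho> I"
      proof (rule inj_onI)
        fix x y assume xy: "x \<in> I" "y \<in> I" "\<rho> x = \<rho> y"
        have a: "\<rho> x \<in> V" "x \<in> L (\<rho> x)" using \<rho>[OF xy(1)] by auto
        have b: "y \<in> L (\<rho> x)" using \<rho>[OF xy(2)] xy(3) by simp
        show "x = y" by (rule uniq[OF xy(1) xy(2) a b])
      qed
      then have "card (\<rho> ` I) = card I" by (rule card_image)
      then have "card (\<rho> ` I) = card V" using cI by simp
      moreover have "\<rho> ` I \<subseteq> V" using \<rho> by blast
      ultimately have rI: "\<rho> ` I = V" using card_subset_eq[OF finV] by blast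
      have ex: "\<exists>j<m. lab v j \<in> I" if vV: "v \<in> V" for v
      proof -
        have "v \<in> \<rho> ` I" using rI vV by simp
        then obtain x where x: "x \<in> I" "\<rho> x = v" by blast
        then have "x \<in> L v" using \<rho>[OF x(1)] by simp
        then obtain j where "j < m" "x = lab v j" using labsurj[OF vV] by blast
        then show ?thesis using x by blast
      qed
      have un: "j = j'" if "v \<in> V" "j < m" "j' < m" "lab v j \<in> I" "lab v j' \<in> I" for v j j'
      proof -
        have "lab v j = lab v j'" using uniq[of "lab v j" "lab v j'" v] labL[of v j] labL[of v j'] that by blast
        then show ?thesis using labinj[of v j j'] that by blast
      qed
      have ex1: "\<exists>!j. j < m \<and> lab v j \<in> I" if "v \<in> V" for v
        using ex[OF that] un[OF that] by blast
      define f where "f v = (if v \<in> V then (THE j. j < m \<and> lab v j \<in> I) else undefined)" for v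
      have fv: "f v < m \<and> lab v (f v) \<in> I" if "v \<in> V" for v
        unfolding f_def using that theI'[OF ex1[OF that]] by simp
      have fC: "f \<in> C0" unfolding C0_def proper_colorings_def
      proof (intro CollectI conjI allI impI)
        show "f \<in> V \<rightarrow>\<^sub>E {..<m}" using fv by (auto simp: f_def)
        fix u v assume uv: "{u, v} \<in> E0"
        have "u \<in> V" "v \<in> V" using E0V[OF uv] by auto
        show "f u \<noteq> f v"
        proof
          assume eq: "f u = f v"
          have "{lab u (f u), lab v (f u)} \<in> EH" using labE[OF uv] fv \<open>u \<in> V\<close> by blast
          moreover have "lab u (f u) \<in> I" using fv \<open>u \<in> V\<close> by blast
          moreover have "lab v (f u) \<in> I" using fv[OF \<open>v \<in> V\<close>] eq by simp
          ultimately show False using ind by blast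
        qed
      qed
      have fG: "f \<in> ?Good" using fC ind[of "lab a1 (f a1)" "lab a2 (f a2)"] ind[of "lab a2 (f a2)" "lab a3 (f a3)"]
          fv[of a1] fv[of a2] fv[of a3] pth by auto
      have "\<Phi> f = I"
      proof
        show "\<Phi> f \<subseteq> I" unfolding \<Phi>_def using fv by auto
        show "I \<subseteq> \<Phi> f"
        proof
          fix x assume x: "x \<in> I"
          then have v: "\<rho> x \<in> V" "x \<in> L (\<rho> x)" using \<rho> by auto
          then obtain j where j: "j < m" "x = lab (\<rho> x) j" using labsurj by blast
          have fx: "f (\<rho> x) < m" "lab (\<rho> x) (f (\<rho> x)) \<in> I" using fv[OF v(1)] by auto
          have "lab (\<rho> x) j \<in> I" using j(2) x by simp
          then have "j = f (\<rho> x)" using un[OF v(1) j(1) fx(1)] fx(2) by blast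
          then have "x = lab (\<rho> x) (f (\<rho> x))" using j(2) by simp
          then show "x \<in> \<Phi> f" unfolding \<Phi>_def using v(1) by (rule image_eqI)
        qed
      qed
      then show "I \<in> \<Phi> ` ?Good" using fG by blast
    qed
  qed
  have "bij_betw \<Phi> ?Good (dp_colorings V VH EH)" using inj img by (simp add: bij_betw_def)
  then show ?thesis unfolding P_DP_def by (simp add: bij_betw_same_card)
qed


lemma compl_card: "real (card {f\<in>C0. \<not> P f}) = real (card C0) - real (card {f\<in>C0. P f})"
proof -
  have "C0 = {f\<in>C0. \<not> P f} \<union> {f\<in>C0. P f}" by auto
  then have "card C0 = card ({f\<in>C0. \<not> P f} \<union> {f\<in>C0. P f})" by simp
  also have "\<dots> = card {f\<in>C0. \<not> P f} + card {f\<in>C0. P f}"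
    by (rule card_Un_disjoint) (use finC0 in auto)
  finally show ?thesis by simp
qed

definition "cL v = {v} \<times> {..<m}"
definition "cVH = V \<times> {..<m}"
definition adj :: "(nat \<Rightarrow> nat) \<Rightarrow> (nat \<Rightarrow> nat) \<Rightarrow> 'a \<times> nat \<Rightarrow> 'a \<times> nat \<Rightarrow> bool" where
  "adj I K x y = (fst x \<in> V \<and> fst y \<in> V \<and> snd x < m \<and> snd y < m \<and>
     ((fst x = fst y \<and> snd x \<noteq> snd y) \<or> ({fst x, fst y} \<in> E0 \<and> snd x = snd y) \<or>
      (fst x = a1 \<and> fst y = a2 \<and> snd x = I (snd y)) \<or> (fst x = a2 \<and> fst y = a3 \<and> snd y = K (snd x))))"
definition "cEH I K = {{x, y} | x y. adj I K x y}"

lemma cEH_iff: "{x, y} \<in> cEH I K \<longleftrightarrow> adj I K x y \<or> adj I K y x"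
proof
  assume "{x, y} \<in> cEH I K"
  then obtain x' y' where "{x, y} = {x', y'}" "adj I K x' y'" unfolding cEH_def by blast
  then show "adj I K x y \<or> adj I K y x" by (auto simp: doubleton_eq_iff)
next
  assume "adj I K x y \<or> adj I K y x"
  then show "{x, y} \<in> cEH I K"
  proof
    assume "adj I K x y" then show ?thesis unfolding cEH_def by blast
  next
    assume h: "adj I K y x"
    have "{x, y} = {y, x}" by (rule insert_commute)
    then show ?thesis unfolding cEH_def using h by blast
  qed
qed

lemma notE0: "{a1, a2} \<notin> E0" "{a2, a1} \<notin> E0" "{a2, a3} \<notin> E0" "{a3, a2} \<notin> E0"
  by (auto simp: E0_def insert_commute)

lemma R1c: "i < m \<Longrightarrow> j < m \<Longrightarrow> ({(a1, i), (a2, j)} \<in> cEH I K) = (i = I j)"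
  unfolding cEH_iff adj_def using pth notE0 by auto

lemma R2c: "j < m \<Longrightarrow> k < m \<Longrightarrow> ({(a2, j), (a3, k)} \<in> cEH I K) = (k = K j)"
  unfolding cEH_iff adj_def using pth notE0 by auto

lemma labEc: "{u, v} \<in> E0 \<Longrightarrow> j < m \<Longrightarrow> {(u, j), (v, j)} \<in> cEH I K"
  unfolding cEH_iff adj_def using E0V by auto

lemma E0E: "e \<in> E0 \<Longrightarrow> e \<in> E" by (simp add: E0_def)

lemma adj_ne: assumes "adj I K x y" shows "x \<noteq> y"
proof
  assume xy: "x = y"
  have "({fst x, fst x} \<in> E0 \<and> snd x = snd x) \<or> (fst x = a1 \<and> fst x = a2 \<and> snd x = I (snd x)) \<or>
     (fst x = a2 \<and> fst x = a3 \<and> snd x = K (snd x))" using assms unfolding xy adj_def by auto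
  moreover have "{fst x, fst x} \<notin> E0" using EV[of "fst x" "fst x"] E0E by blast
  ultimately show False using pth by blast
qed

lemma functional:
  assumes I: "inj_on I {..<m}" and K: "inj_on K {..<m}" and uv: "u \<noteq> v"
    and h1: "adj I K (u, j) (v, l) \<or> adj I K (v, l) (u, j)"
    and h2: "adj I K (u, j') (v, l') \<or> adj I K (v, l') (u, j')"
  shows "(j = j') = (l = l')"
proof -
  have lt: "j < m" "l < m" "j' < m" "l' < m" using h1 h2 by (auto simp: adj_def)
  have iI: "\<And>x y. x < m \<Longrightarrow> y < m \<Longrightarrow> I x = I y \<Longrightarrow> x = y" using I by (auto dest: inj_onD)
  have iK: "\<And>x y. x < m \<Longrightarrow> y < m \<Longrightarrow> K x = K y \<Longrightarrow> x = y" using K by (auto dest: inj_onD)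
  have n: "{u, v} \<notin> E0" if "u = a1 \<and> v = a2 \<or> u = a2 \<and> v = a1 \<or> u = a2 \<and> v = a3 \<or> u = a3 \<and> v = a2"
    using that notE0 by auto
  have n': "{v, u} \<in> E0 \<longleftrightarrow> {u, v} \<in> E0" by (simp add: insert_commute)
  show ?thesis using h1 h2 uv pth lt n n' iI[of l l'] iK[of j j'] iI[of j j'] iK[of l l']
    unfolding adj_def by auto
qed

lemma adj_cases: "adj I K x y \<Longrightarrow> fst x = fst y \<or> {fst x, fst y} \<in> E"
  unfolding adj_def using pth E0E by auto

lemma edge_obtain:
  assumes "e \<in> edges_between (cEH I K) (cL u) (cL v)"
  obtains j l where "e = {(u, j), (v, l)}" "adj I K (u, j) (v, l) \<or> adj I K (v, l) (u, j)"
proof -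
  obtain x y where h: "e \<in> cEH I K" "x \<in> cL u" "y \<in> cL v" "e = {x, y}"
    using assms unfolding edges_between_def by blast
  have x: "x = (u, snd x)" and y: "y = (v, snd y)" using h(2,3) unfolding cL_def by auto
  have "adj I K x y \<or> adj I K y x" using h(1) cEH_iff h(4) by simp
  then have "adj I K (u, snd x) (v, snd y) \<or> adj I K (v, snd y) (u, snd x)" using x y by simp
  moreover have "e = {(u, snd x), (v, snd y)}" using h(4) x y by simp
  ultimately show ?thesis using that by blast
qed

lemma cover_c:
  assumes I: "inj_on I {..<m}" and K: "inj_on K {..<m}"
    and Ilt: "\<And>j. j < m \<Longrightarrow> I j < m" and Klt: "\<And>j. j < m \<Longrightarrow> K j < m"
  shows "is_mfold_cover V E m cL cVH (cEH I K)"
proof -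
  have sg: "simple_graph cVH (cEH I K)"
    unfolding simple_graph_def
  proof (intro conjI ballI)
    show "finite cVH" unfolding cVH_def using finV by simp
    fix e assume "e \<in> cEH I K"
    then obtain x y where e: "e = {x, y}" "adj I K x y" unfolding cEH_def by blast
    have "x \<noteq> y" using adj_ne[OF e(2)] .
    moreover have "x \<in> cVH" "y \<in> cVH" using e(2) unfolding adj_def cVH_def
      by (auto simp: mem_Times_iff)
    ultimately have "x \<noteq> y" "x \<in> cVH" "y \<in> cVH" by auto
    then show "\<exists>u v. e = {u, v} \<and> u \<noteq> v \<and> u \<in> cVH \<and> v \<in> cVH" using e by blast
  qed
  have c3: "u = v \<or> {u, v} \<in> E" if ne: "edges_between (cEH I K) (cL u) (cL v) \<noteq> {}" for u v
  proof -
    obtain e where "e \<in> edges_between (cEH I K) (cL u) (cL v)" using ne by blast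
    then obtain j l where "adj I K (u, j) (v, l) \<or> adj I K (v, l) (u, j)" by (rule edge_obtain)
    then have "u = v \<or> {u, v} \<in> E \<or> {v, u} \<in> E" using adj_cases by fastforce
    then show ?thesis by (metis insert_commute)
  qed
  have c4: "e1 \<inter> e2 = {}"
    if uv: "u \<in> V" "v \<in> V" "{u, v} \<in> E" and e1: "e1 \<in> edges_between (cEH I K) (cL u) (cL v)"
      and e2: "e2 \<in> edges_between (cEH I K) (cL u) (cL v)" and ne: "e1 \<noteq> e2" for u v e1 e2
  proof -
    have uv': "u \<noteq> v" using EV uv(3) by blast
    obtain j l where 1: "e1 = {(u, j), (v, l)}" "adj I K (u, j) (v, l) \<or> adj I K (v, l) (u, j)"
      using e1 by (rule edge_obtain)
    obtain j' l' where 2: "e2 = {(u, j'), (v, l')}" "adj I K (u, j') (v, l') \<or> adj I K (v, l') (u, j')"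
      using e2 by (rule edge_obtain)
    have f: "(j = j') = (l = l')" using functional[OF I K uv' 1(2) 2(2)] .
    show ?thesis
    proof (rule ccontr)
      assume "e1 \<inter> e2 \<noteq> {}"
      then have "j = j' \<or> l = l'" using 1(1) 2(1) uv' by auto
      then have "j = j' \<and> l = l'" using f by blast
      then show False using ne 1(1) 2(1) by simp
    qed
  qed
  have f1: "(\<Union>u\<in>V. cL u) = cVH" unfolding cL_def cVH_def by auto
  have f2: "\<forall>u\<in>V. \<forall>v\<in>V. u \<noteq> v \<longrightarrow> cL u \<inter> cL v = {}" unfolding cL_def by auto
  have f3: "\<forall>u\<in>V. \<forall>x\<in>cL u. \<forall>y\<in>cL u. x \<noteq> y \<longrightarrow> {x, y} \<in> cEH I K"
  proof (intro ballI impI)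
    fix u x y assume u: "u \<in> V" and x: "x \<in> cL u" and y: "y \<in> cL u" and ne: "x \<noteq> y"
    have h: "fst x = u" "fst y = u" "snd x < m" "snd y < m" using x y unfolding cL_def by auto
    then have "snd x \<noteq> snd y" using ne by (simp add: prod_eq_iff)
    then have "adj I K x y" unfolding adj_def using h u by simp
    then show "{x, y} \<in> cEH I K" using cEH_iff by blast
  qed
  have f4: "\<forall>u\<in>V. \<forall>v\<in>V. edges_between (cEH I K) (cL u) (cL v) \<noteq> {} \<longrightarrow> u = v \<or> {u, v} \<in> E"
    using c3 by blast
  have f5: "\<forall>u\<in>V. \<forall>v\<in>V. {u, v} \<in> E \<longrightarrow>
        (\<forall>e1\<in>edges_between (cEH I K) (cL u) (cL v). \<forall>e2\<in>edges_between (cEH I K) (cL u) (cL v).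
            e1 \<noteq> e2 \<longrightarrow> e1 \<inter> e2 = {})"
    using c4 by blast
  have f6: "\<forall>u\<in>V. card (cL u) = m" unfolding cL_def by (simp add: card_cartesian_product)
  have "is_cover V E cL cVH (cEH I K)" unfolding is_cover_def using sg f1 f2 f3 f4 f5 by (intro conjI)
  then show ?thesis unfolding is_mfold_cover_def using f6 by (intro conjI)
qed

lemma exact_c:
  assumes I: "inj_on I {..<m}" and K: "inj_on K {..<m}"
    and lt: "\<And>j. j < m \<Longrightarrow> I j < m \<and> K j < m"
    and pv: "\<And>j. j < m \<Longrightarrow> pat A1v A2v A3v A4v A5v (I j) j (K j) = Av"
  shows "real (P_DP V cVH (cEH I K)) = P0v - Av"
proof -
  have "P_DP V cVH (cEH I K) = card {f\<in>C0. \<not> ({(a1, f a1), (a2, f a2)} \<in> cEH I K \<or> {(a2, f a2), (a3, f a3)} \<in> cEH I K)}"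
  proof (rule count[where lab = "\<lambda>v j. (v, j)"])
    show "is_mfold_cover V E m cL cVH (cEH I K)" using cover_c I K lt by blast
    show "bij_betw (\<lambda>j. (v, j)) {..<m} (cL v)" if "v \<in> V" for v
      unfolding cL_def by (rule bij_betwI[where g=snd]) auto
    show "{(u, j), (v, j)} \<in> cEH I K" if "{u, v} \<in> E0" "j < m" for u v j using labEc that .
  qed
  then have "real (P_DP V cVH (cEH I K)) = real (card {f\<in>C0. \<not> ({(a1, f a1), (a2, f a2)} \<in> cEH I K \<or> {(a2, f a2), (a3, f a3)} \<in> cEH I K)})"
    by (rule arg_cong)
  also have "\<dots> = real (card C0) - real (card {f\<in>C0. {(a1, f a1), (a2, f a2)} \<in> cEH I K \<or> {(a2, f a2), (a3, f a3)} \<in> cEH I K})"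
    by (rule compl_card)
  finally have eq: "real (P_DP V cVH (cEH I K)) = real (card C0) - real (card {f\<in>C0. {(a1, f a1), (a2, f a2)} \<in> cEH I K \<or> {(a2, f a2), (a3, f a3)} \<in> cEH I K})" .
  have bad: "real (card {f\<in>C0. {(a1, f a1), (a2, f a2)} \<in> cEH I K \<or> {(a2, f a2), (a3, f a3)} \<in> cEH I K}) = Av"
  proof (rule bad_eq[of "\<lambda>i j. {(a1, i), (a2, j)} \<in> cEH I K" I "\<lambda>j k. {(a2, j), (a3, k)} \<in> cEH I K" K Av])
    show "\<And>i j. i < m \<Longrightarrow> j < m \<Longrightarrow> ({(a1, i), (a2, j)} \<in> cEH I K) = (i = I j)" by (rule R1c)
    show "\<And>j k. j < m \<Longrightarrow> k < m \<Longrightarrow> ({(a2, j), (a3, k)} \<in> cEH I K) = (k = K j)" by (rule R2c)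
  qed (use lt pv in auto)
  have c0: "real (card C0) = P0v" using P0 by (simp add: chrom_poly_def C0_def)
  show ?thesis unfolding eq bad c0 ..
qed

definition "sh1 j = (if Suc j = m then 0 else Suc j)"

lemma sh1_lt: "j < m \<Longrightarrow> sh1 j < m" using m3 by (auto simp: sh1_def)
lemma sh1_ne: "j < m \<Longrightarrow> sh1 j \<noteq> j" using m3 by (auto simp: sh1_def)
lemma sh1_inj: "inj_on sh1 {..<m}" by (rule inj_onI) (auto simp: sh1_def split: if_splits)
lemma sh2_ne: "j < m \<Longrightarrow> sh1 (sh1 j) \<noteq> j" using m3 by (auto simp: sh1_def split: if_splits)

lemma exists_IK:
  assumes "Av \<in> {A1v, A2v, A3v, A4v, A5v}"
  shows "\<exists>I K. inj_on I {..<m} \<and> inj_on K {..<m} \<and> (\<forall>j<m. I j < m \<and> K j < m) \<and>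
     (\<forall>j<m. pat A1v A2v A3v A4v A5v (I j) j (K j) = Av)"
proof -
  have idi: "inj_on (\<lambda>j. j) {..<m}" by simp
  have s2: "inj_on (\<lambda>j. sh1 (sh1 j)) {..<m}"
    using sh1_inj sh1_lt by (auto simp: inj_on_def)
  consider "Av = A1v" | "Av = A2v" | "Av = A3v" | "Av = A4v" | "Av = A5v" using assms by blast
  then show ?thesis
  proof cases
    case 1
    have p: "\<forall>j<m. pat A1v A2v A3v A4v A5v (j) j (j) = Av"
    proof (intro allI impI)
      fix j assume j: "j < m"
      have d: "sh1 j \<noteq> j" "sh1 (sh1 j) \<noteq> j" "sh1 (sh1 j) \<noteq> sh1 j" using sh1_ne sh1_lt sh2_ne j by auto
      show "pat A1v A2v A3v A4v A5v (j) j (j) = Av" using d 1 by (simp add: pat_def)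
    qed
    have "inj_on (\<lambda>j. j) {..<m} \<and> inj_on (\<lambda>j. j) {..<m} \<and> (\<forall>j<m. j < m \<and> j < m)"
      using sh1_inj s2 sh1_lt by auto
    then show ?thesis using p by blast
  next
    case 2
    have p: "\<forall>j<m. pat A1v A2v A3v A4v A5v (j) j (sh1 j) = Av"
    proof (intro allI impI)
      fix j assume j: "j < m"
      have d: "sh1 j \<noteq> j" "sh1 (sh1 j) \<noteq> j" "sh1 (sh1 j) \<noteq> sh1 j" using sh1_ne sh1_lt sh2_ne j by auto
      show "pat A1v A2v A3v A4v A5v (j) j (sh1 j) = Av" using d 2 by (simp add: pat_def)
    qed
    have "inj_on (\<lambda>j. j) {..<m} \<and> inj_on (sh1) {..<m} \<and> (\<forall>j<m. j < m \<and> sh1 j < m)"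
      using sh1_inj s2 sh1_lt by auto
    then show ?thesis using p by blast
  next
    case 3
    have p: "\<forall>j<m. pat A1v A2v A3v A4v A5v (sh1 j) j (j) = Av"
    proof (intro allI impI)
      fix j assume j: "j < m"
      have d: "sh1 j \<noteq> j" "sh1 (sh1 j) \<noteq> j" "sh1 (sh1 j) \<noteq> sh1 j" using sh1_ne sh1_lt sh2_ne j by auto
      show "pat A1v A2v A3v A4v A5v (sh1 j) j (j) = Av" using d 3 by (simp add: pat_def)
    qed
    have "inj_on (sh1) {..<m} \<and> inj_on (\<lambda>j. j) {..<m} \<and> (\<forall>j<m. sh1 j < m \<and> j < m)"
      using sh1_inj s2 sh1_lt by auto
    then show ?thesis using p by blast
  next
    case 4
    have p: "\<forall>j<m. pat A1v A2v A3v A4v A5v (sh1 j) j (sh1 j) = Av"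
    proof (intro allI impI)
      fix j assume j: "j < m"
      have d: "sh1 j \<noteq> j" "sh1 (sh1 j) \<noteq> j" "sh1 (sh1 j) \<noteq> sh1 j" using sh1_ne sh1_lt sh2_ne j by auto
      show "pat A1v A2v A3v A4v A5v (sh1 j) j (sh1 j) = Av" using d 4 by (simp add: pat_def)
    qed
    have "inj_on (sh1) {..<m} \<and> inj_on (sh1) {..<m} \<and> (\<forall>j<m. sh1 j < m \<and> sh1 j < m)"
      using sh1_inj s2 sh1_lt by auto
    then show ?thesis using p by blast
  next
    case 5
    have p: "\<forall>j<m. pat A1v A2v A3v A4v A5v (sh1 j) j (sh1 (sh1 j)) = Av"
    proof (intro allI impI)
      fix j assume j: "j < m"
      have d: "sh1 j \<noteq> j" "sh1 (sh1 j) \<noteq> j" "sh1 (sh1 j) \<noteq> sh1 j" using sh1_ne sh1_lt sh2_ne j by auto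
      show "pat A1v A2v A3v A4v A5v (sh1 j) j (sh1 (sh1 j)) = Av" using d 5 by (simp add: pat_def)
    qed
    have "inj_on (sh1) {..<m} \<and> inj_on (\<lambda>j. sh1 (sh1 j)) {..<m} \<and> (\<forall>j<m. sh1 j < m \<and> sh1 (sh1 j) < m)"
      using sh1_inj s2 sh1_lt by auto
    then show ?thesis using p by blast
  qed
qed

lemma match_uniq:
  assumes cov: "is_mfold_cover V E m L VH EH" and uv: "u \<in> V" "v \<in> V" "{u, v} \<in> E"
    and x: "x \<in> L u" "x' \<in> L u" and y: "y \<in> L v" and e: "{x, y} \<in> EH" "{x', y} \<in> EH"
  shows "x = x'"
proof (rule ccontr)
  assume ne: "x \<noteq> x'"
  have cv: "is_cover V E L VH EH" using cov by (simp add: is_mfold_cover_def)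
  have C4: "\<forall>u\<in>V. \<forall>v\<in>V. {u, v} \<in> E \<longrightarrow>
        (\<forall>e1\<in>edges_between EH (L u) (L v). \<forall>e2\<in>edges_between EH (L u) (L v).
            e1 \<noteq> e2 \<longrightarrow> e1 \<inter> e2 = {})"
    using cv unfolding is_cover_def by simp
  have D: "\<forall>u\<in>V. \<forall>v\<in>V. u \<noteq> v \<longrightarrow> L u \<inter> L v = {}" using cv unfolding is_cover_def by simp
  have uv': "u \<noteq> v" using EV uv(3) by blast
  have "L u \<inter> L v = {}" using D uv(1,2) uv' by blast
  then have xy: "x \<noteq> y" using x(1) y by blast
  have b1: "{x, y} \<in> edges_between EH (L u) (L v)" unfolding edges_between_def using e x y by blast
  have b2: "{x', y} \<in> edges_between EH (L u) (L v)" unfolding edges_between_def using e x y by blast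
  have "{x, y} \<noteq> {x', y}" using ne xy by (auto simp: doubleton_eq_iff)
  then have "{x, y} \<inter> {x', y} = {}" using C4[rule_format, OF uv(1) uv(2) uv(3) b1 b2] by blast
  then show False by blast
qed

end

theorem mainTheorem14:
  fixes V :: "'a set" and E :: "'a set set" and m :: nat
    and L :: "'a \<Rightarrow> 'b set" and VH :: "'b set" and EH :: "'b set set"
    and a1 a2 a3 :: 'a
  assumes G: "simple_graph V E"
    and m: "m \<ge> 3"
    and cov: "is_mfold_cover V E m L VH EH"
    and path: "a1 \<in> V" "a2 \<in> V" "a3 \<in> V" "a1 \<noteq> a2" "a2 \<noteq> a3" "a1 \<noteq> a3"
      "{a1, a2} \<in> E" "{a2, a3} \<in> E"
    and nonadj: "{a1, a3} \<notin> E"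
    and nat_bij: "natural_bijection V (E - {{a1, a2}, {a2, a3}}) m L
        (EH - (edges_between EH (L a1) (L a2) \<union> edges_between EH (L a2) (L a3)))"
  shows
    "(let e1 = {a1, a2}; e2 = {a2, a3};
          P0 = real (chrom_poly V (E - {e1, e2}) m);
          P1 = real (chrom_poly V (E - {e1}) m);
          P2 = real (chrom_poly V (E - {e2}) m);
          P = real (chrom_poly V E m);
          Ps = real (chrom_poly V (E \<union> {{a1, a3}}) m);
          A1 = P0 - P;
          A2 = P0 - P2 + P / (real m - 1);
          A3 = P0 - P1 + P / (real m - 1);
          A4 = (P1 + P2 + Ps - P) / (real m - 1);
          A5 = (P1 + P2 - Ps / (real m - 2)) / (real m - 1);
          B = P0 - Max {A1, A2, A3, A4, A5}
      in real (P_DP V VH EH) \<ge> B \<and>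
         (\<exists>(L' :: 'a \<Rightarrow> ('a \<times> nat) set) VH' EH'.
             is_mfold_cover V E m L' VH' EH' \<and> real (P_DP V VH' EH') = B))"
proof -
  interpret S: setting V E m a1 a2 a3
    using G m path nonadj by unfold_locales auto
  have e0: "E - {{a1, a2}, {a2, a3}} = S.E0" by (simp add: S.E0_def)
  have p0: "real (chrom_poly V (E - {{a1, a2}, {a2, a3}}) m) = S.P0v" unfolding e0 by (rule S.P0)
  have low: "real (P_DP V VH EH) \<ge> S.P0v - S.Amax"
  proof -
    obtain lab where lab: "\<forall>v\<in>V. bij_betw (lab v) {..<m} (L v)"
      and labE0: "\<forall>u\<in>V. \<forall>v\<in>V. {u, v} \<in> S.E0 \<longrightarrow> (\<forall>j<m. {lab u j, lab v j}
          \<in> EH - (edges_between EH (L a1) (L a2) \<union> edges_between EH (L a2) (L a3)))"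
      using nat_bij unfolding natural_bijection_def e0 by blast
    have labE: "{lab u j, lab v j} \<in> EH" if "{u, v} \<in> S.E0" "j < m" for u v j
      using labE0 S.E0V[OF that(1)] that by blast
    have labL: "lab v j \<in> L v" if "v \<in> V" "j < m" for v j
      using lab that by (auto dest: bij_betw_apply)
    have labinj: "j = j'" if "v \<in> V" "lab v j = lab v j'" "j < m" "j' < m" for v j j'
      using lab that unfolding bij_betw_def inj_on_def by blast
    have cnt: "P_DP V VH EH = card {f\<in>S.C0. \<not> ({lab a1 (f a1), lab a2 (f a2)} \<in> EH \<or> {lab a2 (f a2), lab a3 (f a3)} \<in> EH)}"
      by (rule S.count[OF cov]) (use lab labE in auto)
    have bad: "real (card {f\<in>S.C0. {lab a1 (f a1), lab a2 (f a2)} \<in> EH \<or> {lab a2 (f a2), lab a3 (f a3)} \<in> EH}) \<le> S.Amax"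
    proof (rule S.bad_le)
      fix i i' j assume h: "i < m" "i' < m" "j < m" "{lab a1 i, lab a2 j} \<in> EH" "{lab a1 i', lab a2 j} \<in> EH"
      have "lab a1 i = lab a1 i'"
        by (rule S.match_uniq[OF cov path(1) path(2) path(7)]) (use h labL path in auto)
      then show "i = i'" using labinj path h by blast
    next
      fix j k k' assume h: "j < m" "k < m" "k' < m" "{lab a2 j, lab a3 k} \<in> EH" "{lab a2 j, lab a3 k'} \<in> EH"
      have e32: "{a3, a2} \<in> E" using path by (simp add: insert_commute)
      have "lab a3 k = lab a3 k'"
        by (rule S.match_uniq[OF cov path(3) path(2) e32]) (use h labL path in \<open>auto simp: insert_commute\<close>)
      then show "k = k'" using labinj path h by blast
    qed
    have "real (P_DP V VH EH) = real (card S.C0) - real (card {f\<in>S.C0. {lab a1 (f a1), lab a2 (f a2)} \<in> EH \<or> {lab a2 (f a2), lab a3 (f a3)} \<in> EH})"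
      unfolding cnt by (rule S.compl_card)
    moreover have "real (card S.C0) = S.P0v" using S.P0 by (simp add: chrom_poly_def S.C0_def)
    ultimately show ?thesis using bad by linarith
  qed
  have ex: "\<exists>(L' :: 'a \<Rightarrow> ('a \<times> nat) set) VH' EH'.
             is_mfold_cover V E m L' VH' EH' \<and> real (P_DP V VH' EH') = S.P0v - S.Amax"
  proof -
    have mi: "S.Amax \<in> {S.A1v, S.A2v, S.A3v, S.A4v, S.A5v}" by (rule Max_in) auto
    obtain I K where IK: "inj_on I {..<m}" "inj_on K {..<m}" "\<forall>j<m. I j < m \<and> K j < m"
      "\<forall>j<m. pat S.A1v S.A2v S.A3v S.A4v S.A5v (I j) j (K j) = S.Amax"
      using S.exists_IK[OF mi] by blast
    have "is_mfold_cover V E m S.cL S.cVH (S.cEH I K)" by (rule S.cover_c) (use IK in auto)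
    moreover have "real (P_DP V S.cVH (S.cEH I K)) = S.P0v - S.Amax"
      by (rule S.exact_c) (use IK in auto)
    ultimately show ?thesis by blast
  qed
  show ?thesis
    unfolding Let_def p0 S.P1 S.P2 S.PG S.Ps S.A1 S.A2 S.A3 S.A4 S.A5
    using low ex by blast
qed

end
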